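(* Let $D_4=\langle a,b\mid a^4=b^2=1,\ bab=a^3\rangle$ be the dihedral group of order $8$ and $\mathsf{AUT}(D_4)$ the crossed module $\partial:D_4\to\mathrm{Aut}(D_4)$ with $\partial(g)$ the inner automorphism $h\mapsto ghg^{-1}$ and the tautological action. Then $\mathbf Z_0(\mathsf{AUT}(D_4))\cong C_2\times D_4$, and $$\pi_0(\mathbf Z_*(\mathsf{AUT}(D_4)))\cong C_2\times C_2,\qquad \pi_1(\mathbf Z_*(\mathsf{AUT}(D_4)))\cong C_2,$$ whereas Norrie's centre of $\mathsf{AUT}(D_4)$ is $\{1,a^2\}\to\{1\}$; in particular the inclusion $j_*$ of Norrie's centre into $\mathbf Z_*(\mathsf{AUT}(D_4))$ is not a weak equivalence (it is not an isomorphism on $\pi_0$).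
   Context: A crossed module $\mathbf G_*$: groups $G_1,G_0$, a homomorphism $\partial:G_1\to G_0$ and a left action $(x,a)\mapsto{}^xa$ of $G_0$ on $G_1$ by automorphisms, with $\partial({}^x a)=x\partial(a)x^{-1}$ and ${}^{\partial(b)}a=bab^{-1}$; $\pi_0=G_0/\mathrm{Im}\partial$, $\pi_1=\ker\partial$. Commutators $[x,t]=xtx^{-1}t^{-1}$. $\mathbf Z_0(\mathbf G_* )$ is the group of pairs $(x,\xi)$, $x\in G_0$, $\xi:G_0\to G_1$ with $\partial\xi(t)=[x,t]$, $\xi(\partial a)={}^xa\,a^{-1}$, $\xi(st)=\xi(s)\,{}^s\xi(t)$, product $(x,\xi)(y,\eta)=(xy,t\mapsto{}^x\eta(t)\xi(t))$. $\mathbf Z_*(\mathbf G_* )$ is the crossed module $\delta:G_1\to\mathbf Z_0(\mathbf G_* )$, $\delta(c)=(\partial c,\ t\mapsto c\,({}^tc)^{-1})$. Norrie's centre is the crossed module $\partial:\{a\in G_1:{}^xa=a\ \forall x\}\to\mathsf Z_{G_1}(G_0)$, where $\mathsf Z_{G_1}(G_0)$ is the set of central elements of $G_0$ acting trivially on $G_1$, and $j_*$ is given by inclusion on $G_1$ and $x\mapsto(x,\mathbf 1)$ on $G_0$. A weak equivalence is a morphism inducing isomorphisms on $\pi_0$ and $\pi_1$. *)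

theory Defs
  imports "HOL-Algebra.Algebra"
begin

definition crossed_module ::
  "('a, 'm) monoid_scheme \<Rightarrow> ('b, 'n) monoid_scheme \<Rightarrow> ('a \<Rightarrow> 'b) \<Rightarrow> ('b \<Rightarrow> 'a \<Rightarrow> 'a) \<Rightarrow> bool"
  where "crossed_module G1 G0 d act \<longleftrightarrow>
     group G1 \<and> group G0 \<and> d \<in> hom G1 G0 \<and>
     (\<forall>x\<in>carrier G0. (\<lambda>a\<in>carrier G1. act x a) \<in> auto G1) \<and>
     (\<forall>a\<in>carrier G1. act \<one>\<^bsub>G0\<^esub> a = a) \<and>
     (\<forall>x\<in>carrier G0. \<forall>y\<in>carrier G0. \<forall>a\<in>carrier G1.
        act (x \<otimes>\<^bsub>G0\<^esub> y) a = act x (act y a)) \<and>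
     (\<forall>x\<in>carrier G0. \<forall>a\<in>carrier G1.
        d (act x a) = x \<otimes>\<^bsub>G0\<^esub> d a \<otimes>\<^bsub>G0\<^esub> inv\<^bsub>G0\<^esub> x) \<and>
     (\<forall>a\<in>carrier G1. \<forall>b\<in>carrier G1.
        act (d b) a = b \<otimes>\<^bsub>G1\<^esub> a \<otimes>\<^bsub>G1\<^esub> inv\<^bsub>G1\<^esub> b)"

definition commut :: "('b, 'n) monoid_scheme \<Rightarrow> 'b \<Rightarrow> 'b \<Rightarrow> 'b"
  where "commut G x t = x \<otimes>\<^bsub>G\<^esub> t \<otimes>\<^bsub>G\<^esub> inv\<^bsub>G\<^esub> x \<otimes>\<^bsub>G\<^esub> inv\<^bsub>G\<^esub> t"

definition Z0 ::
  "('a, 'm) monoid_scheme \<Rightarrow> ('b, 'n) monoid_scheme \<Rightarrow> ('a \<Rightarrow> 'b) \<Rightarrow> ('b \<Rightarrow> 'a \<Rightarrow> 'a)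
     \<Rightarrow> ('b \<times> ('b \<Rightarrow> 'a)) monoid"
  where "Z0 G1 G0 d act =
    \<lparr>carrier = {(x, \<xi>). x \<in> carrier G0 \<and> \<xi> \<in> carrier G0 \<rightarrow>\<^sub>E carrier G1 \<and>
        (\<forall>t\<in>carrier G0. d (\<xi> t) = commut G0 x t) \<and>
        (\<forall>a\<in>carrier G1. \<xi> (d a) = act x a \<otimes>\<^bsub>G1\<^esub> inv\<^bsub>G1\<^esub> a) \<and>
        (\<forall>s\<in>carrier G0. \<forall>t\<in>carrier G0.
            \<xi> (s \<otimes>\<^bsub>G0\<^esub> t) = \<xi> s \<otimes>\<^bsub>G1\<^esub> act s (\<xi> t))},
     monoid.mult = (\<lambda>(x, \<xi>) (y, \<eta>). (x \<otimes>\<^bsub>G0\<^esub> y, \<lambda>t\<in>carrier G0. act x (\<eta> t) \<otimes>\<^bsub>G1\<^esub> \<xi> t)),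
     one = (\<one>\<^bsub>G0\<^esub>, \<lambda>t\<in>carrier G0. \<one>\<^bsub>G1\<^esub>)\<rparr>"

definition Zdelta ::
  "('a, 'm) monoid_scheme \<Rightarrow> ('b, 'n) monoid_scheme \<Rightarrow> ('a \<Rightarrow> 'b) \<Rightarrow> ('b \<Rightarrow> 'a \<Rightarrow> 'a)
     \<Rightarrow> 'a \<Rightarrow> 'b \<times> ('b \<Rightarrow> 'a)"
  where "Zdelta G1 G0 d act c =
    (d c, \<lambda>t\<in>carrier G0. c \<otimes>\<^bsub>G1\<^esub> inv\<^bsub>G1\<^esub> (act t c))"

definition Zact :: "('b \<Rightarrow> 'a \<Rightarrow> 'a) \<Rightarrow> 'b \<times> ('b \<Rightarrow> 'a) \<Rightarrow> 'a \<Rightarrow> 'a"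
  where "Zact act p a = act (fst p) a"

definition pi0 :: "('a, 'm) monoid_scheme \<Rightarrow> ('b, 'n) monoid_scheme \<Rightarrow> ('a \<Rightarrow> 'b) \<Rightarrow> 'b set monoid"
  where "pi0 G1 G0 d = G0 Mod (d ` carrier G1)"

definition pi1 :: "('a, 'm) monoid_scheme \<Rightarrow> ('b, 'n) monoid_scheme \<Rightarrow> ('a \<Rightarrow> 'b) \<Rightarrow> 'a monoid"
  where "pi1 G1 G0 d = \<lparr>carrier = kernel G1 G0 d, monoid.mult = monoid.mult G1, one = one G1\<rparr>"

definition pi0_map ::
  "('a, 'm) monoid_scheme \<Rightarrow> ('b, 'n) monoid_scheme \<Rightarrow> ('a \<Rightarrow> 'b) \<Rightarrow> ('c \<Rightarrow> 'b) \<Rightarrow> 'c set \<Rightarrow> 'b set"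
  where "pi0_map G1 G0 d f0 C = (d ` carrier G1) <#>\<^bsub>G0\<^esub> (f0 ` C)"

definition weak_equivalence where
  "weak_equivalence H1 H0 e G1 G0 d f1 f0 \<longleftrightarrow>
     pi0_map G1 G0 d f0 \<in> iso (pi0 H1 H0 e) (pi0 G1 G0 d) \<and>
     f1 \<in> iso (pi1 H1 H0 e) (pi1 G1 G0 d)"

definition norrie_G1 :: "('a, 'm) monoid_scheme \<Rightarrow> ('b, 'n) monoid_scheme \<Rightarrow> ('b \<Rightarrow> 'a \<Rightarrow> 'a) \<Rightarrow> 'a monoid"
  where "norrie_G1 G1 G0 act =
    \<lparr>carrier = {a \<in> carrier G1. \<forall>x\<in>carrier G0. act x a = a}, monoid.mult = monoid.mult G1, one = one G1\<rparr>"

definition norrie_G0 :: "('a, 'm) monoid_scheme \<Rightarrow> ('b, 'n) monoid_scheme \<Rightarrow> ('b \<Rightarrow> 'a \<Rightarrow> 'a) \<Rightarrow> 'b monoid"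
  where "norrie_G0 G1 G0 act =
    \<lparr>carrier = {x \<in> carrier G0. (\<forall>y\<in>carrier G0. x \<otimes>\<^bsub>G0\<^esub> y = y \<otimes>\<^bsub>G0\<^esub> x) \<and>
                                 (\<forall>a\<in>carrier G1. act x a = a)},
     monoid.mult = monoid.mult G0, one = one G0\<rparr>"

definition j0 :: "('a, 'm) monoid_scheme \<Rightarrow> ('b, 'n) monoid_scheme \<Rightarrow> 'b \<Rightarrow> 'b \<times> ('b \<Rightarrow> 'a)"
  where "j0 G1 G0 x = (x, \<lambda>t\<in>carrier G0. \<one>\<^bsub>G1\<^esub>)"

text \<open>Element (k,s), k<4, s<2, stands for a^k b^s.\<close>
definition D4 :: "(nat \<times> nat) monoid"
  where "D4 = \<lparr>carrier = {0..<4} \<times> {0..<2},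
     monoid.mult = (\<lambda>(k1, s1) (k2, s2). ((k1 + (if s1 = 0 then k2 else 4 - k2)) mod 4, (s1 + s2) mod 2)),
     one = (0, 0)\<rparr>"

definition D4_a :: "nat \<times> nat" where "D4_a = (1, 0)"
definition D4_b :: "nat \<times> nat" where "D4_b = (0, 1)"

definition AUT_d :: "('a, 'm) monoid_scheme \<Rightarrow> 'a \<Rightarrow> ('a \<Rightarrow> 'a)"
  where "AUT_d G g = (\<lambda>h\<in>carrier G. g \<otimes>\<^bsub>G\<^esub> h \<otimes>\<^bsub>G\<^esub> inv\<^bsub>G\<^esub> g)"

definition AUT_act :: "('a \<Rightarrow> 'a) \<Rightarrow> 'a \<Rightarrow> 'a"
  where "AUT_act \<phi> h = \<phi> h"

definition C2 :: "int monoid" where "C2 = integer_mod_group 2"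

end

theory Submission
  imports Defs
begin


lemma carrier_D4: "carrier D4 = {(0,0),(0,1),(1,0),(1,1),(2,0),(2,1),(3,0),(3,1)}"
  by (auto simp: D4_def)

lemma mem_D4[simp]: "(x \<in> carrier D4) = (fst x < 4 \<and> snd x < 2)"
  by (cases x) (auto simp: D4_def)

lemma mult_D4[simp]: "(k1,s1) \<otimes>\<^bsub>D4\<^esub> (k2,s2) = ((k1 + (if s1 = 0 then k2 else 4 - k2)) mod 4, (s1+s2) mod 2)"
  by (simp add: D4_def)

lemma one_D4[simp]: "\<one>\<^bsub>D4\<^esub> = (0,0)" by (simp add: D4_def)

lemma ball_D4: "(\<forall>x\<in>carrier D4. P x) = (P (0,0) \<and> P (0,1) \<and> P (1,0) \<and> P (1,1) \<and> P (2,0) \<and> P (2,1) \<and> P (3,0) \<and> P (3,1))"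
  unfolding carrier_D4 by simp

lemma group_D4: "group D4"
proof (rule groupI)
  show "\<And>x y. x \<in> carrier D4 \<Longrightarrow> y \<in> carrier D4 \<Longrightarrow> x \<otimes>\<^bsub>D4\<^esub> y \<in> carrier D4"
    by (auto simp: D4_def)
  show "\<one>\<^bsub>D4\<^esub> \<in> carrier D4" by simp
  have "\<forall>x\<in>carrier D4. \<forall>y\<in>carrier D4. \<forall>z\<in>carrier D4. x \<otimes>\<^bsub>D4\<^esub> y \<otimes>\<^bsub>D4\<^esub> z = x \<otimes>\<^bsub>D4\<^esub> (y \<otimes>\<^bsub>D4\<^esub> z)"
    unfolding ball_D4 by simp
  then show "\<And>x y z. x \<in> carrier D4 \<Longrightarrow> y \<in> carrier D4 \<Longrightarrow> z \<in> carrier D4 \<Longrightarrow> x \<otimes>\<^bsub>D4\<^esub> y \<otimes>\<^bsub>D4\<^esub> z = x \<otimes>\<^bsub>D4\<^esub> (y \<otimes>\<^bsub>D4\<^esub> z)"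
    by blast
  have "\<forall>x\<in>carrier D4. \<one>\<^bsub>D4\<^esub> \<otimes>\<^bsub>D4\<^esub> x = x" unfolding ball_D4 by simp
  then show "\<And>x. x \<in> carrier D4 \<Longrightarrow> \<one>\<^bsub>D4\<^esub> \<otimes>\<^bsub>D4\<^esub> x = x" by blast
  have "\<forall>x\<in>carrier D4. \<exists>y\<in>carrier D4. y \<otimes>\<^bsub>D4\<^esub> x = \<one>\<^bsub>D4\<^esub>"
    unfolding ball_D4 by (simp add: carrier_D4)
  then show "\<And>x. x \<in> carrier D4 \<Longrightarrow> \<exists>y\<in>carrier D4. y \<otimes>\<^bsub>D4\<^esub> x = \<one>\<^bsub>D4\<^esub>" by blast
qed


lemma inv_D4: "x \<in> carrier D4 \<Longrightarrow> inv\<^bsub>D4\<^esub> x = (if snd x = 0 then (4 - fst x) mod 4 else fst x, snd x)"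
proof -
  have "\<forall>x\<in>carrier D4. inv\<^bsub>D4\<^esub> x = (if snd x = 0 then (4 - fst x) mod 4 else fst x, snd x)"
    unfolding ball_D4 by (simp add: group.inv_equality[OF group_D4])
  then show "x \<in> carrier D4 \<Longrightarrow> ?thesis" by blast
qed

definition Phi :: "nat \<Rightarrow> nat \<Rightarrow> nat \<times> nat \<Rightarrow> nat \<times> nat" where
  "Phi u j = (\<lambda>p\<in>carrier D4. ((u * fst p + snd p * j) mod 4, snd p))"

lemma Phi_app[simp]: "k < 4 \<Longrightarrow> s < 2 \<Longrightarrow> Phi u j (k,s) = ((u * k + s * j) mod 4, s)"
  by (simp add: Phi_def)

lemma Phi_comp: "compose (carrier D4) (Phi u1 j1) (Phi u2 j2) = Phi ((u1*u2) mod 4) ((u1*j2+j1) mod 4)"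
proof (rule ext)
  fix p :: "nat \<times> nat"
  show "compose (carrier D4) (Phi u1 j1) (Phi u2 j2) p = Phi ((u1*u2) mod 4) ((u1*j2+j1) mod 4) p"
  proof (cases "p \<in> carrier D4")
    case True
    obtain k s where p: "p = (k,s)" by force
    have e1: "(u1 * ((u2 * k + s * j2) mod 4) + s * j1) mod 4 = (u1 * (u2 * k + s * j2) + s * j1) mod 4"
    proof -
      have "(u1 * ((u2 * k + s * j2) mod 4) + s * j1) mod 4 = ((u1 * ((u2 * k + s * j2) mod 4)) mod 4 + s * j1) mod 4"
        by (rule mod_add_left_eq[symmetric])
      also have "\<dots> = ((u1 * (u2 * k + s * j2)) mod 4 + s * j1) mod 4" by (simp only: mod_mult_right_eq)
      also have "\<dots> = (u1 * (u2 * k + s * j2) + s * j1) mod 4" by (rule mod_add_left_eq)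
      finally show ?thesis .
    qed
    have e2: "(u1 * u2 mod 4 * k + s * ((u1 * j2 + j1) mod 4)) mod 4 = (u1 * u2 * k + s * (u1 * j2 + j1)) mod 4"
    proof -
      have "(u1 * u2 mod 4 * k + s * ((u1 * j2 + j1) mod 4)) mod 4 = ((u1 * u2 mod 4 * k) mod 4 + (s * ((u1 * j2 + j1) mod 4)) mod 4) mod 4"
        by (rule mod_add_eq[symmetric])
      also have "\<dots> = ((u1 * u2 * k) mod 4 + (s * (u1 * j2 + j1)) mod 4) mod 4" by (simp only: mod_mult_right_eq mod_mult_left_eq)
      also have "\<dots> = (u1 * u2 * k + s * (u1 * j2 + j1)) mod 4" by (rule mod_add_eq)
      finally show ?thesis .
    qed
    have "(u1 * ((u2 * k + s * j2) mod 4) + s * j1) mod 4 = (u1 * u2 mod 4 * k + s * ((u1 * j2 + j1) mod 4)) mod 4"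
      unfolding e1 e2 by (simp add: algebra_simps)
    then show ?thesis using True p by (simp add: compose_def)
  next
    case False
    then show ?thesis by (simp add: compose_def Phi_def del: mem_D4)
  qed
qed


lemma less4: "(n::nat) < 4 \<Longrightarrow> n \<in> {0,1,2,3}" by auto

lemma Phi_ext: "Phi u j \<in> extensional (carrier D4)"
  by (simp add: Phi_def)

lemma Phi_closed: "x \<in> carrier D4 \<Longrightarrow> Phi u j x \<in> carrier D4"
  by (cases x) simp

lemma Phi_hom_brute: "\<forall>u\<in>{1,3::nat}. \<forall>j\<in>{0,1,2,3::nat}. \<forall>x\<in>carrier D4. \<forall>y\<in>carrier D4.
   Phi u j (x \<otimes>\<^bsub>D4\<^esub> y) = Phi u j x \<otimes>\<^bsub>D4\<^esub> Phi u j y"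
  unfolding ball_D4 by simp

lemma Phi_inv_brute: "\<forall>u\<in>{1,3::nat}. \<forall>j\<in>{0,1,2,3::nat}. \<forall>x\<in>carrier D4.
   Phi u ((4 - (u*j) mod 4) mod 4) (Phi u j x) = x \<and> Phi u j (Phi u ((4 - (u*j) mod 4) mod 4) x) = x"
  unfolding ball_D4 by simp

lemma Phi_auto: "u \<in> {1,3} \<Longrightarrow> j \<in> {0,1,2,3} \<Longrightarrow> Phi u j \<in> auto D4"
  unfolding auto_def Bij_def
proof (intro IntI CollectI)
  assume u: "u \<in> {1,3}" and j: "j \<in> {0,1,2,3}"
  show "Phi u j \<in> hom D4 D4"
    unfolding hom_def using Phi_hom_brute u j by (auto simp: Phi_closed)
  show "Phi u j \<in> extensional (carrier D4)" by (rule Phi_ext)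
  show "bij_betw (Phi u j) (carrier D4) (carrier D4)"
    apply (rule bij_betw_byWitness[where f'="Phi u ((4 - (u*j) mod 4) mod 4)"])
    using Phi_inv_brute u j by (auto simp: Phi_closed simp del: mem_D4)
qed

lemma auto_brute: "\<forall>fa\<in>carrier D4. \<forall>fb\<in>carrier D4. fa \<otimes>\<^bsub>D4\<^esub> fa \<noteq> (0,0) \<longrightarrow> fa \<otimes>\<^bsub>D4\<^esub> fb \<noteq> fb \<otimes>\<^bsub>D4\<^esub> fa \<longrightarrow>
   (fst fa = 1 \<or> fst fa = 3) \<and> fst fb < 4 \<and>
   (0,0) = Phi (fst fa) (fst fb) (0,0) \<and>
   fa = Phi (fst fa) (fst fb) (1,0) \<and>
   fa \<otimes>\<^bsub>D4\<^esub> fa = Phi (fst fa) (fst fb) (2,0) \<and>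
   fa \<otimes>\<^bsub>D4\<^esub> (fa \<otimes>\<^bsub>D4\<^esub> fa) = Phi (fst fa) (fst fb) (3,0) \<and>
   fb = Phi (fst fa) (fst fb) (0,1) \<and>
   fa \<otimes>\<^bsub>D4\<^esub> fb = Phi (fst fa) (fst fb) (1,1) \<and>
   fa \<otimes>\<^bsub>D4\<^esub> (fa \<otimes>\<^bsub>D4\<^esub> fb) = Phi (fst fa) (fst fb) (2,1) \<and>
   fb \<otimes>\<^bsub>D4\<^esub> fa = Phi (fst fa) (fst fb) (3,1)"
  unfolding ball_D4 by simp

lemma auto_Phi:
  assumes f: "f \<in> auto D4"
  shows "\<exists>u j. u \<in> {1,3} \<and> j \<in> {0,1,2,3} \<and> f = Phi u j"
proof -
  have hom: "f \<in> hom D4 D4" and ext: "f \<in> extensional (carrier D4)"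
    and bij: "bij_betw f (carrier D4) (carrier D4)"
    using f by (auto simp: auto_def Bij_def)
  have cl: "\<And>x. x \<in> carrier D4 \<Longrightarrow> f x \<in> carrier D4" using hom by (auto simp: hom_def simp del: mem_D4)
  have m: "\<And>x y. x \<in> carrier D4 \<Longrightarrow> y \<in> carrier D4 \<Longrightarrow> f (x \<otimes>\<^bsub>D4\<^esub> y) = f x \<otimes>\<^bsub>D4\<^esub> f y"
    using hom by (auto simp: hom_def simp del: mem_D4)
  have inj: "inj_on f (carrier D4)" using bij by (simp add: bij_betw_def)
  define fa where "fa = f (1,0)"
  define fb where "fb = f (0,1)"
  have fa: "fa \<in> carrier D4" unfolding fa_def by (rule cl) simp
  have fb: "fb \<in> carrier D4" unfolding fb_def by (rule cl) simp
  have f0: "f (0,0) = (0,0)"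
  proof -
    have "f (0,0) = f (0,0) \<otimes>\<^bsub>D4\<^esub> f (0,0)" using m[of "(0,0)" "(0,0)"] by simp
    moreover have "f (0,0) \<in> carrier D4" by (rule cl) simp
    moreover have "\<forall>v\<in>carrier D4. v = v \<otimes>\<^bsub>D4\<^esub> v \<longrightarrow> v = (0,0)" unfolding ball_D4 by simp
    ultimately show ?thesis by blast
  qed
  have f20: "f (2,0) = fa \<otimes>\<^bsub>D4\<^esub> fa"
  proof -
    have "f ((1::nat,0::nat) \<otimes>\<^bsub>D4\<^esub> (1,0)) = f (1::nat,0::nat) \<otimes>\<^bsub>D4\<^esub> f (1,0)" by (rule m) simp_all
    moreover have "(1::nat,0::nat) \<otimes>\<^bsub>D4\<^esub> (1,0) = (2,0)" by simp
    ultimately show ?thesis by (simp only: fa_def)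
  qed
  have f30: "f (3,0) = fa \<otimes>\<^bsub>D4\<^esub> (fa \<otimes>\<^bsub>D4\<^esub> fa)"
  proof -
    have "f ((1::nat,0::nat) \<otimes>\<^bsub>D4\<^esub> (2,0)) = f (1::nat,0::nat) \<otimes>\<^bsub>D4\<^esub> f (2,0)" by (rule m) simp_all
    moreover have "(1::nat,0::nat) \<otimes>\<^bsub>D4\<^esub> (2,0) = (3,0)" by simp
    ultimately show ?thesis using f20 by (simp only: fa_def)
  qed
  have f11: "f (1,1) = fa \<otimes>\<^bsub>D4\<^esub> fb"
  proof -
    have "f ((1::nat,0::nat) \<otimes>\<^bsub>D4\<^esub> (0,1)) = f (1::nat,0::nat) \<otimes>\<^bsub>D4\<^esub> f (0,1)" by (rule m) simp_all
    moreover have "(1::nat,0::nat) \<otimes>\<^bsub>D4\<^esub> (0,1) = (1,1)" by simp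
    ultimately show ?thesis by (simp only: fa_def fb_def)
  qed
  have f21: "f (2,1) = fa \<otimes>\<^bsub>D4\<^esub> (fa \<otimes>\<^bsub>D4\<^esub> fb)"
  proof -
    have "f ((1::nat,0::nat) \<otimes>\<^bsub>D4\<^esub> (1,1)) = f (1::nat,0::nat) \<otimes>\<^bsub>D4\<^esub> f (1,1)" by (rule m) simp_all
    moreover have "(1::nat,0::nat) \<otimes>\<^bsub>D4\<^esub> (1,1) = (2,1)" by simp
    ultimately show ?thesis using f11 by (simp only: fa_def)
  qed
  have f31: "f (3,1) = fb \<otimes>\<^bsub>D4\<^esub> fa"
  proof -
    have "f ((0::nat,1::nat) \<otimes>\<^bsub>D4\<^esub> (1,0)) = f (0::nat,1::nat) \<otimes>\<^bsub>D4\<^esub> f (1,0)" by (rule m) simp_all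
    moreover have "(0::nat,1::nat) \<otimes>\<^bsub>D4\<^esub> (1,0) = (3,1)" by simp
    ultimately show ?thesis by (simp only: fa_def fb_def)
  qed
  have c1: "fa \<otimes>\<^bsub>D4\<^esub> fa \<noteq> (0,0)"
  proof
    assume "fa \<otimes>\<^bsub>D4\<^esub> fa = (0,0)"
    then have "f (2,0) = f (0,0)" using f20 f0 by simp
    then show False using inj by (auto dest: inj_onD)
  qed
  have c2: "fa \<otimes>\<^bsub>D4\<^esub> fb \<noteq> fb \<otimes>\<^bsub>D4\<^esub> fa"
  proof
    assume "fa \<otimes>\<^bsub>D4\<^esub> fb = fb \<otimes>\<^bsub>D4\<^esub> fa"
    then have "f (1,1) = f (3,1)" using f11 f31 by simp
    then show False using inj by (auto dest: inj_onD)
  qed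
  note B = auto_brute[rule_format, OF fa fb c1 c2]
  have "f = Phi (fst fa) (fst fb)"
  proof (rule extensionalityI[OF ext Phi_ext])
    fix x assume "x \<in> carrier D4"
    then have "x \<in> {(0,0),(0,1),(1,0),(1,1),(2,0),(2,1),(3,0),(3,1)}" by (simp only: carrier_D4)
    then show "f x = Phi (fst fa) (fst fb) x"
      using B f0 f20 f30 f11 f21 f31 by (auto simp: fa_def fb_def simp del: Phi_app)
  qed
  moreover have "fst fb \<in> {0,1,2,3}" using B less4 by blast
  moreover have "fst fa \<in> {1,3}" using B by blast
  ultimately show ?thesis by blast
qed

lemma carrier_Aut: "carrier (AutoGroup D4) = {Phi 1 0, Phi 1 1, Phi 1 2, Phi 1 3, Phi 3 0, Phi 3 1, Phi 3 2, Phi 3 3}"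
proof -
  have "carrier (AutoGroup D4) = auto D4" by (simp add: AutoGroup_def)
  also have "\<dots> = {Phi 1 0, Phi 1 1, Phi 1 2, Phi 1 3, Phi 3 0, Phi 3 1, Phi 3 2, Phi 3 3}"
    using auto_Phi Phi_auto by blast
  finally show ?thesis .
qed

lemma mult_Aut: "x \<in> carrier (AutoGroup D4) \<Longrightarrow> y \<in> carrier (AutoGroup D4) \<Longrightarrow> x \<otimes>\<^bsub>AutoGroup D4\<^esub> y = compose (carrier D4) x y"
  by (simp add: AutoGroup_def BijGroup_def auto_def)

lemma one_Aut: "\<one>\<^bsub>AutoGroup D4\<^esub> = Phi 1 0"
proof -
  have "\<one>\<^bsub>AutoGroup D4\<^esub> = (\<lambda>x\<in>carrier D4. x)" by (simp add: AutoGroup_def BijGroup_def)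
  also have "\<dots> = Phi 1 0" by (rule extensionalityI[OF _ Phi_ext]) auto
  finally show ?thesis .
qed

lemma group_Aut: "group (AutoGroup D4)"
  by (rule group.AutoGroup[OF group_D4])

lemma Phi_mult: "u1 \<in> {1,3} \<Longrightarrow> j1 \<in> {0,1,2,3} \<Longrightarrow> u2 \<in> {1,3} \<Longrightarrow> j2 \<in> {0,1,2,3} \<Longrightarrow> Phi u1 j1 \<otimes>\<^bsub>AutoGroup D4\<^esub> Phi u2 j2 = Phi ((u1*u2) mod 4) ((u1*j2+j1) mod 4)"
  by (subst mult_Aut) (auto simp: Phi_comp carrier_Aut)

lemma Phi_inv: "u \<in> {1,3} \<Longrightarrow> j \<in> {0,1,2,3} \<Longrightarrow> inv\<^bsub>AutoGroup D4\<^esub> (Phi u j) = Phi u ((4 - (u*j) mod 4) mod 4)"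
  apply (rule group.inv_equality[OF group_Aut])
  apply (auto simp: Phi_mult one_Aut carrier_Aut)
  done

lemma ball_Aut: "(\<forall>x\<in>carrier (AutoGroup D4). P x) = (P (Phi 1 0) \<and> P (Phi 1 1) \<and> P (Phi 1 2) \<and> P (Phi 1 3) \<and> P (Phi 3 0) \<and> P (Phi 3 1) \<and> P (Phi 3 2) \<and> P (Phi 3 3))"
  unfolding carrier_Aut by simp

lemma AUT_d_Phi: "g \<in> carrier D4 \<Longrightarrow> AUT_d D4 g = Phi (if snd g = 0 then 1 else 3) ((2 * fst g) mod 4)"
proof -
  have "\<forall>g\<in>carrier D4. \<forall>h\<in>carrier D4. g \<otimes>\<^bsub>D4\<^esub> h \<otimes>\<^bsub>D4\<^esub> inv\<^bsub>D4\<^esub> g = Phi (if snd g = 0 then 1 else 3) ((2 * fst g) mod 4) h"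
    unfolding ball_D4 by (simp add: inv_D4)
  moreover assume "g \<in> carrier D4"
  ultimately show ?thesis
    unfolding AUT_d_def by (intro extensionalityI[OF _ Phi_ext]) (auto simp del: mem_D4)
qed


lemma Phi_eq_iff[simp]: "(Phi u j = Phi u' j') = (u mod 4 = u' mod 4 \<and> j mod 4 = j' mod 4)"
proof
  assume e: "Phi u j = Phi u' j'"
  have "Phi u j (1,0) = Phi u' j' (1,0)" "Phi u j (0,1) = Phi u' j' (0,1)" using e by simp_all
  then show "u mod 4 = u' mod 4 \<and> j mod 4 = j' mod 4" by simp
next
  assume "u mod 4 = u' mod 4 \<and> j mod 4 = j' mod 4"
  then have e: "u mod 4 = u' mod 4" "j mod 4 = j' mod 4" by auto
  show "Phi u j = Phi u' j'"
  proof (rule extensionalityI[OF Phi_ext Phi_ext])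
    fix p :: "nat \<times> nat" assume p: "p \<in> carrier D4"
    have "(u * fst p + snd p * j) mod 4 = (u' * fst p + snd p * j') mod 4"
      by (metis e mod_add_cong mod_mult_cong mod_mult_left_eq mod_mult_right_eq)
    then show "Phi u j p = Phi u' j' p" using p by (simp add: Phi_def)
  qed
qed


lemma AUT_d_in: "g \<in> carrier D4 \<Longrightarrow> AUT_d D4 g \<in> carrier (AutoGroup D4)"
proof -
  have "\<forall>g\<in>carrier D4. AUT_d D4 g \<in> carrier (AutoGroup D4)"
    unfolding ball_D4 by (simp add: AUT_d_Phi carrier_Aut)
  then show "g \<in> carrier D4 \<Longrightarrow> ?thesis" by blast
qed

lemma d_hom: "AUT_d D4 \<in> hom D4 (AutoGroup D4)"
proof -
  have "\<forall>g\<in>carrier D4. \<forall>h\<in>carrier D4. AUT_d D4 (g \<otimes>\<^bsub>D4\<^esub> h) = AUT_d D4 g \<otimes>\<^bsub>AutoGroup D4\<^esub> AUT_d D4 h"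
    unfolding ball_D4 by (simp add: AUT_d_Phi Phi_mult)
  then show ?thesis unfolding hom_def using AUT_d_in by (auto simp del: mem_D4)
qed

lemma Aut_ext: "x \<in> carrier (AutoGroup D4) \<Longrightarrow> x \<in> extensional (carrier D4)"
  by (auto simp: carrier_Aut Phi_ext)

lemma Aut_closed: "x \<in> carrier (AutoGroup D4) \<Longrightarrow> a \<in> carrier D4 \<Longrightarrow> x a \<in> carrier D4"
  by (auto simp: carrier_Aut Phi_closed simp del: mem_D4)

lemma cm: "crossed_module D4 (AutoGroup D4) (AUT_d D4) AUT_act"
  unfolding crossed_module_def
proof (intro conjI)
  show "group D4" by (rule group_D4)
  show "group (AutoGroup D4)" by (rule group_Aut)
  show "AUT_d D4 \<in> hom D4 (AutoGroup D4)" by (rule d_hom)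
  show "\<forall>x\<in>carrier (AutoGroup D4). (\<lambda>a\<in>carrier D4. AUT_act x a) \<in> auto D4"
  proof
    fix x assume x: "x \<in> carrier (AutoGroup D4)"
    have "(\<lambda>a\<in>carrier D4. AUT_act x a) = x"
      using Aut_ext[OF x] unfolding AUT_act_def by (simp add: extensional_restrict)
    then show "(\<lambda>a\<in>carrier D4. AUT_act x a) \<in> auto D4" using x by (simp add: AutoGroup_def)
  qed
  show "\<forall>a\<in>carrier D4. AUT_act \<one>\<^bsub>AutoGroup D4\<^esub> a = a"
    by (auto simp: AUT_act_def one_Aut)
  show "\<forall>x\<in>carrier (AutoGroup D4). \<forall>y\<in>carrier (AutoGroup D4). \<forall>a\<in>carrier D4.
        AUT_act (x \<otimes>\<^bsub>AutoGroup D4\<^esub> y) a = AUT_act x (AUT_act y a)"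
    by (auto simp: AUT_act_def mult_Aut compose_def simp del: mem_D4)
  show "\<forall>x\<in>carrier (AutoGroup D4). \<forall>a\<in>carrier D4.
        AUT_d D4 (AUT_act x a) = x \<otimes>\<^bsub>AutoGroup D4\<^esub> AUT_d D4 a \<otimes>\<^bsub>AutoGroup D4\<^esub> inv\<^bsub>AutoGroup D4\<^esub> x"
    unfolding ball_Aut ball_D4 AUT_act_def by (simp add: AUT_d_Phi Phi_mult Phi_inv)
  show "\<forall>a\<in>carrier D4. \<forall>b\<in>carrier D4. AUT_act (AUT_d D4 b) a = b \<otimes>\<^bsub>D4\<^esub> a \<otimes>\<^bsub>D4\<^esub> inv\<^bsub>D4\<^esub> b"
    by (auto simp: AUT_act_def AUT_d_def simp del: mem_D4)
qed


lemma pows: "D4_a [^]\<^bsub>D4\<^esub> (4::nat) = \<one>\<^bsub>D4\<^esub> \<and> D4_b [^]\<^bsub>D4\<^esub> (2::nat) = \<one>\<^bsub>D4\<^esub>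
    \<and> D4_b \<otimes>\<^bsub>D4\<^esub> D4_a \<otimes>\<^bsub>D4\<^esub> D4_b = D4_a [^]\<^bsub>D4\<^esub> (3::nat)"
proof -
  have e4: "(4::nat) = Suc (Suc (Suc (Suc 0)))" and e3: "(3::nat) = Suc (Suc (Suc 0))" and e2: "(2::nat) = Suc (Suc 0)" by simp_all
  show ?thesis unfolding e4 e3 e2 nat_pow_Suc nat_pow_0 by (simp add: D4_a_def D4_b_def)
qed

lemma a2: "D4_a [^]\<^bsub>D4\<^esub> (2::nat) = (2,0)"
proof -
  have e2: "(2::nat) = Suc (Suc 0)" by simp
  show ?thesis unfolding e2 nat_pow_Suc nat_pow_0 by (simp add: D4_a_def)
qed

lemma norrie1: "carrier (norrie_G1 D4 (AutoGroup D4) AUT_act) = {\<one>\<^bsub>D4\<^esub>, D4_a [^]\<^bsub>D4\<^esub> (2::nat)}"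
proof -
  have "\<forall>a\<in>carrier D4. (\<forall>x\<in>carrier (AutoGroup D4). x a = a) \<longleftrightarrow> a = (0,0) \<or> a = (2,0)"
    unfolding ball_D4 ball_Aut by simp
  then have "{a \<in> carrier D4. \<forall>x\<in>carrier (AutoGroup D4). x a = a} = {a \<in> carrier D4. a = (0,0) \<or> a = (2,0)}"
    by blast
  also have "\<dots> = {(0,0),(2,0)}" by auto
  finally show ?thesis unfolding a2 one_D4 norrie_G1_def AUT_act_def by simp
qed

lemma norrie0: "carrier (norrie_G0 D4 (AutoGroup D4) AUT_act) = {\<one>\<^bsub>AutoGroup D4\<^esub>}"
proof -
  have "\<forall>x\<in>carrier (AutoGroup D4). (\<forall>a\<in>carrier D4. x a = a) \<longleftrightarrow> x = Phi 1 0"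
    unfolding ball_Aut ball_D4 by simp
  moreover have "Phi 1 0 \<in> carrier (AutoGroup D4)" by (simp add: carrier_Aut)
  moreover have "\<forall>y\<in>carrier (AutoGroup D4). Phi 1 0 \<otimes>\<^bsub>AutoGroup D4\<^esub> y = y \<otimes>\<^bsub>AutoGroup D4\<^esub> Phi 1 0"
    unfolding ball_Aut by (simp add: Phi_mult)
  ultimately have "{x \<in> carrier (AutoGroup D4). (\<forall>y\<in>carrier (AutoGroup D4). x \<otimes>\<^bsub>AutoGroup D4\<^esub> y = y \<otimes>\<^bsub>AutoGroup D4\<^esub> x) \<and> (\<forall>a\<in>carrier D4. x a = a)} = {Phi 1 0}"
    by blast
  then show ?thesis unfolding norrie_G0_def one_Aut AUT_act_def by simp
qed


abbreviation "AutG \<equiv> AutoGroup D4"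
abbreviation "ZZ \<equiv> Z0 D4 AutG (AUT_d D4) AUT_act"

definition Ex :: "nat \<Rightarrow> nat \<Rightarrow> (nat \<times> nat \<Rightarrow> nat \<times> nat) \<Rightarrow> nat \<times> nat" where
  "Ex c jx t = ((c * fst (t (0,1)) + (if fst (t (1,0)) = 3 then jx else 0)) mod 4, 0)"

definition E :: "nat \<Rightarrow> nat \<Rightarrow> (nat \<times> nat \<Rightarrow> nat \<times> nat) \<times> ((nat \<times> nat \<Rightarrow> nat \<times> nat) \<Rightarrow> nat \<times> nat)" where
  "E c jx = (Phi (1 + 2 * (c mod 2)) jx, restrict (Ex c jx) (carrier AutG))"

lemma Ex_Phi[simp]: "Ex c jx (Phi u j) = ((c * (j mod 4) + (if u mod 4 = 3 then jx else 0)) mod 4, 0)"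
  by (simp add: Ex_def)

lemma Phi_in_Aut[simp]: "u \<in> {1,3} \<Longrightarrow> j < 4 \<Longrightarrow> Phi u j \<in> carrier AutG"
proof -
  assume "u \<in> {1,3}" "j < 4"
  then have "Phi u j \<in> auto D4" using Phi_auto[of u j] less4[of j] by blast
  then show ?thesis by (simp add: AutoGroup_def)
qed

lemma E_in_reduce:
  assumes c: "c < 4" and jx: "jx < 4"
  and H1: "\<forall>t\<in>carrier AutG. AUT_d D4 (Ex c jx t) = commut AutG (Phi (1 + 2 * (c mod 2)) jx) t"
  and H2: "\<forall>a\<in>carrier D4. Ex c jx (AUT_d D4 a) = Phi (1 + 2 * (c mod 2)) jx a \<otimes>\<^bsub>D4\<^esub> inv\<^bsub>D4\<^esub> a"
  and H3: "\<forall>s\<in>carrier AutG. \<forall>t\<in>carrier AutG. Ex c jx (s \<otimes>\<^bsub>AutG\<^esub> t) = Ex c jx s \<otimes>\<^bsub>D4\<^esub> s (Ex c jx t)"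
  shows "E c jx \<in> carrier ZZ"
proof -
  have u: "1 + 2 * (c mod 2) \<in> {1,3::nat}" by auto
  have cl: "\<And>t. Ex c jx t \<in> carrier D4" by (simp add: Ex_def)
  have dA: "\<And>a. a \<in> carrier D4 \<Longrightarrow> AUT_d D4 a \<in> carrier AutG" by (rule AUT_d_in)
  have mA: "\<And>s t. s \<in> carrier AutG \<Longrightarrow> t \<in> carrier AutG \<Longrightarrow> s \<otimes>\<^bsub>AutG\<^esub> t \<in> carrier AutG"
    by (rule group.subgroup_self[OF group_Aut, THEN subgroup.m_closed])
  define x where "x = Phi (1 + 2 * (c mod 2)) jx"
  define \<xi> where "\<xi> = restrict (Ex c jx) (carrier AutG)"
  have 1: "x \<in> carrier AutG" unfolding x_def using u jx by simp
  have 2: "\<xi> \<in> carrier AutG \<rightarrow>\<^sub>E carrier D4" unfolding \<xi>_def using cl by (simp del: mem_D4)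
  have 3: "\<forall>t\<in>carrier AutG. AUT_d D4 (\<xi> t) = commut AutG x t" unfolding \<xi>_def x_def using H1 by simp
  have 4: "\<forall>a\<in>carrier D4. \<xi> (AUT_d D4 a) = AUT_act x a \<otimes>\<^bsub>D4\<^esub> inv\<^bsub>D4\<^esub> a"
    unfolding \<xi>_def x_def AUT_act_def using H2 dA by (simp del: mem_D4 Ex_Phi)
  have 5: "\<forall>s\<in>carrier AutG. \<forall>t\<in>carrier AutG. \<xi> (s \<otimes>\<^bsub>AutG\<^esub> t) = \<xi> s \<otimes>\<^bsub>D4\<^esub> AUT_act s (\<xi> t)"
    unfolding \<xi>_def AUT_act_def using H3 mA by (simp del: mem_D4 Ex_Phi)
  have "(x, \<xi>) \<in> carrier ZZ" unfolding Z0_def using 1 2 3 4 5 by (simp del: mem_D4 Ex_Phi)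
  then show ?thesis unfolding E_def x_def \<xi>_def .
qed


lemma E_H1: "\<forall>c\<in>{0,1,2,3}. \<forall>jx\<in>{0,1,2,3}. \<forall>t\<in>carrier AutG. AUT_d D4 (Ex c jx t) = commut AutG (Phi (1 + 2 * (c mod 2)) jx) t"
  unfolding ball_Aut by (simp add: AUT_d_Phi commut_def Phi_mult Phi_inv)


lemma E_H2: "\<forall>c\<in>{0,1,2,3}. \<forall>jx\<in>{0,1,2,3}. \<forall>a\<in>carrier D4. Ex c jx (AUT_d D4 a) = Phi (1 + 2 * (c mod 2)) jx a \<otimes>\<^bsub>D4\<^esub> inv\<^bsub>D4\<^esub> a"
  unfolding ball_D4 by (simp add: AUT_d_Phi inv_D4)

lemma E_H3: "\<forall>c\<in>{0,1,2,3}. \<forall>jx\<in>{0,1,2,3}. \<forall>s\<in>carrier AutG. \<forall>t\<in>carrier AutG. Ex c jx (s \<otimes>\<^bsub>AutG\<^esub> t) = Ex c jx s \<otimes>\<^bsub>D4\<^esub> s (Ex c jx t)"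
  unfolding ball_Aut by (simp add: Phi_mult)


lemma E_in: "c < 4 \<Longrightarrow> jx < 4 \<Longrightarrow> E c jx \<in> carrier ZZ"
  apply (rule E_in_reduce)
  using E_H1 E_H2 E_H3 less4[of c] less4[of jx] by blast+

lemma ZZ_brute: "\<forall>x\<in>carrier AutG. \<forall>v\<in>carrier D4. AUT_d D4 v = commut AutG x (Phi 1 1) \<longrightarrow>
  (let c = fst v; jx = fst (x (0,1)) in c < 4 \<and> jx < 4 \<and> x = Phi (1+2*(c mod 2)) jx \<and>
   x (0,0) \<otimes>\<^bsub>D4\<^esub> inv\<^bsub>D4\<^esub> (0,0) = Ex c jx (Phi 1 0) \<and>
   v = Ex c jx (Phi 1 1) \<and>
   x (1,0) \<otimes>\<^bsub>D4\<^esub> inv\<^bsub>D4\<^esub> (1,0) = Ex c jx (Phi 1 2) \<and>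
   (x (1,0) \<otimes>\<^bsub>D4\<^esub> inv\<^bsub>D4\<^esub> (1,0)) \<otimes>\<^bsub>D4\<^esub> Phi 1 2 v = Ex c jx (Phi 1 3) \<and>
   x (0,1) \<otimes>\<^bsub>D4\<^esub> inv\<^bsub>D4\<^esub> (0,1) = Ex c jx (Phi 3 0) \<and>
   (x (1,1) \<otimes>\<^bsub>D4\<^esub> inv\<^bsub>D4\<^esub> (1,1)) \<otimes>\<^bsub>D4\<^esub> Phi 3 2 v = Ex c jx (Phi 3 1) \<and>
   x (1,1) \<otimes>\<^bsub>D4\<^esub> inv\<^bsub>D4\<^esub> (1,1) = Ex c jx (Phi 3 2) \<and>
   (x (0,1) \<otimes>\<^bsub>D4\<^esub> inv\<^bsub>D4\<^esub> (0,1)) \<otimes>\<^bsub>D4\<^esub> Phi 3 0 v = Ex c jx (Phi 3 3))"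
  unfolding ball_Aut ball_D4 by (simp add: AUT_d_Phi commut_def Phi_mult Phi_inv inv_D4 Let_def)


lemma ZZ_E:
  assumes z: "z \<in> carrier ZZ"
  shows "\<exists>c jx. c < 4 \<and> jx < 4 \<and> z = E c jx"
proof -
  obtain x \<xi> where zx: "z = (x, \<xi>)" by force
  have x: "x \<in> carrier AutG" and xi: "\<xi> \<in> carrier AutG \<rightarrow>\<^sub>E carrier D4"
    and H1: "\<forall>t\<in>carrier AutG. AUT_d D4 (\<xi> t) = commut AutG x t"
    and H2: "\<forall>a\<in>carrier D4. \<xi> (AUT_d D4 a) = AUT_act x a \<otimes>\<^bsub>D4\<^esub> inv\<^bsub>D4\<^esub> a"
    and H3: "\<forall>s\<in>carrier AutG. \<forall>t\<in>carrier AutG. \<xi> (s \<otimes>\<^bsub>AutG\<^esub> t) = \<xi> s \<otimes>\<^bsub>D4\<^esub> AUT_act s (\<xi> t)"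
    using z unfolding zx Z0_def by auto
  define v where "v = \<xi> (Phi 1 1)"
  have P11: "Phi 1 1 \<in> carrier AutG" by simp
  have v: "v \<in> carrier D4" unfolding v_def using xi P11 by (auto simp del: mem_D4)
  have cv: "AUT_d D4 v = commut AutG x (Phi 1 1)" unfolding v_def using H1 P11 by blast
  define c where "c = fst v"
  define jx where "jx = fst (x (0,1))"
  note B = ZZ_brute[rule_format, OF x v cv, unfolded Let_def, folded c_def jx_def]
  have d00: "AUT_d D4 (0,0) = Phi 1 0" by (simp add: AUT_d_Phi)
  have d10: "AUT_d D4 (1,0) = Phi 1 2" by (simp add: AUT_d_Phi)
  have d01: "AUT_d D4 (0,1) = Phi 3 0" by (simp add: AUT_d_Phi)
  have d11: "AUT_d D4 (1,1) = Phi 3 2" by (simp add: AUT_d_Phi)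
  have m13: "Phi 1 2 \<otimes>\<^bsub>AutG\<^esub> Phi 1 1 = Phi 1 3" by (simp add: Phi_mult)
  have m33: "Phi 3 0 \<otimes>\<^bsub>AutG\<^esub> Phi 1 1 = Phi 3 3" by (simp add: Phi_mult)
  have m31: "Phi 3 2 \<otimes>\<^bsub>AutG\<^esub> Phi 1 1 = Phi 3 1" by (simp add: Phi_mult)
  have x10: "\<xi> (Phi 1 0) = x (0,0) \<otimes>\<^bsub>D4\<^esub> inv\<^bsub>D4\<^esub> (0,0)"
    using H2[rule_format, of "(0,0)"] unfolding d00 AUT_act_def by simp
  have x12: "\<xi> (Phi 1 2) = x (1,0) \<otimes>\<^bsub>D4\<^esub> inv\<^bsub>D4\<^esub> (1,0)"
    using H2[rule_format, of "(1,0)"] unfolding d10 AUT_act_def by simp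
  have x30: "\<xi> (Phi 3 0) = x (0,1) \<otimes>\<^bsub>D4\<^esub> inv\<^bsub>D4\<^esub> (0,1)"
    using H2[rule_format, of "(0,1)"] unfolding d01 AUT_act_def by simp
  have x32: "\<xi> (Phi 3 2) = x (1,1) \<otimes>\<^bsub>D4\<^esub> inv\<^bsub>D4\<^esub> (1,1)"
    using H2[rule_format, of "(1,1)"] unfolding d11 AUT_act_def by simp
  have x13: "\<xi> (Phi 1 3) = \<xi> (Phi 1 2) \<otimes>\<^bsub>D4\<^esub> Phi 1 2 v"
    using H3[rule_format, of "Phi 1 2" "Phi 1 1"] unfolding m13 AUT_act_def v_def by simp
  have x33: "\<xi> (Phi 3 3) = \<xi> (Phi 3 0) \<otimes>\<^bsub>D4\<^esub> Phi 3 0 v"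
    using H3[rule_format, of "Phi 3 0" "Phi 1 1"] unfolding m33 AUT_act_def v_def by simp
  have x31: "\<xi> (Phi 3 1) = \<xi> (Phi 3 2) \<otimes>\<^bsub>D4\<^esub> Phi 3 2 v"
    using H3[rule_format, of "Phi 3 2" "Phi 1 1"] unfolding m31 AUT_act_def v_def by simp
  have "\<xi> = restrict (Ex c jx) (carrier AutG)"
  proof (rule extensionalityI)
    show "\<xi> \<in> extensional (carrier AutG)" using xi by (simp add: PiE_iff)
    show "restrict (Ex c jx) (carrier AutG) \<in> extensional (carrier AutG)" by simp
    fix t assume "t \<in> carrier AutG"
    then have "t \<in> {Phi 1 0, Phi 1 1, Phi 1 2, Phi 1 3, Phi 3 0, Phi 3 1, Phi 3 2, Phi 3 3}"
      by (simp only: carrier_Aut)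
    moreover have "\<xi> (Phi 1 1) = v" by (simp add: v_def)
    moreover have "\<And>t. t \<in> carrier AutG \<Longrightarrow> restrict (Ex c jx) (carrier AutG) t = Ex c jx t" by simp
    ultimately show "\<xi> t = restrict (Ex c jx) (carrier AutG) t"
      using B x10 x12 x30 x32 x13 x33 x31 \<open>t \<in> carrier AutG\<close>
      apply -
      apply (elim insertE emptyE)
             apply metis+
      done
  qed
  then show ?thesis unfolding zx E_def using B by blast
qed


lemma arith1: "((u1::nat) * ((c2 * J + j2) mod 4) mod 4 + (c1 * J + j1) mod 4) mod 4 =
      ((u1 * c2 + c1) mod 4 * J + (u1 * j2 + j1) mod 4) mod 4"
proof -
  have "(u1 * ((c2 * J + j2) mod 4) mod 4 + (c1 * J + j1) mod 4) mod 4 = (u1 * ((c2 * J + j2) mod 4) + (c1 * J + j1)) mod 4"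
    by (rule mod_add_eq)
  also have "\<dots> = ((u1 * ((c2 * J + j2) mod 4)) mod 4 + (c1 * J + j1)) mod 4" by (rule mod_add_left_eq[symmetric])
  also have "\<dots> = ((u1 * (c2 * J + j2)) mod 4 + (c1 * J + j1)) mod 4" by (simp only: mod_mult_right_eq)
  also have "\<dots> = (u1 * (c2 * J + j2) + (c1 * J + j1)) mod 4" by (rule mod_add_left_eq)
  also have "\<dots> = ((u1 * c2 + c1) * J + (u1 * j2 + j1)) mod 4" by (simp add: algebra_simps)
  also have "\<dots> = (((u1 * c2 + c1) * J) mod 4 + (u1 * j2 + j1) mod 4) mod 4" by (rule mod_add_eq[symmetric])
  also have "\<dots> = (((u1 * c2 + c1) mod 4 * J) mod 4 + ((u1 * j2 + j1) mod 4) mod 4) mod 4" by (simp only: mod_mult_left_eq mod_mod_trivial)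
  also have "\<dots> = ((u1 * c2 + c1) mod 4 * J + (u1 * j2 + j1) mod 4) mod 4" by (rule mod_add_eq)
  finally show ?thesis .
qed

lemma arith2: "((u1::nat) * (c2 * J mod 4) mod 4 + c1 * J mod 4) mod 4 = (u1 * c2 + c1) mod 4 * J mod 4"
  using arith1[of u1 c2 J 0 c1 0] by simp

lemma mult_pt:
  assumes t: "t \<in> carrier AutG"
  shows "Phi u1 j1 (Ex c2 j2 t) \<otimes>\<^bsub>D4\<^esub> Ex c1 j1 t = Ex ((u1 * c2 + c1) mod 4) ((u1 * j2 + j1) mod 4) t"
proof -
  obtain u j where tj: "t = Phi u j" using t auto_Phi[of t] by (auto simp: AutoGroup_def)
  show ?thesis unfolding tj by (simp add: arith1 arith2)
qed


lemma u_arith: "\<forall>c1\<in>{0,1,2,3::nat}. \<forall>c2\<in>{0,1,2,3::nat}.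
  (1 + 2 * (c1 mod 2)) * (1 + 2 * (c2 mod 2)) mod 4 = 1 + 2 * (((1 + 2 * (c1 mod 2)) * c2 + c1) mod 4 mod 2)"
  by simp

lemma E_mult:
  assumes c1: "c1 < 4" and j1: "j1 < 4" and c2: "c2 < 4" and j2: "j2 < 4"
  shows "E c1 j1 \<otimes>\<^bsub>ZZ\<^esub> E c2 j2 = E (((1 + 2 * (c1 mod 2)) * c2 + c1) mod 4) (((1 + 2 * (c1 mod 2)) * j2 + j1) mod 4)"
proof -
  define u1 where "u1 = 1 + 2 * (c1 mod 2)"
  define u2 where "u2 = 1 + 2 * (c2 mod 2)"
  have u1: "u1 \<in> {1,3}" and u2: "u2 \<in> {1,3}" unfolding u1_def u2_def by auto
  have "Phi u1 j1 \<otimes>\<^bsub>AutG\<^esub> Phi u2 j2 = Phi (u1 * u2 mod 4) ((u1 * j2 + j1) mod 4)"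
    using u1 u2 less4[OF j1] less4[OF j2] by (simp only: Phi_mult)
  also have "\<dots> = Phi (1 + 2 * ((u1 * c2 + c1) mod 4 mod 2)) ((u1 * j2 + j1) mod 4)"
    using less4[OF c1] less4[OF c2] unfolding u1_def u2_def by auto
  finally have e1: "Phi u1 j1 \<otimes>\<^bsub>AutG\<^esub> Phi u2 j2 = Phi (1 + 2 * ((u1 * c2 + c1) mod 4 mod 2)) ((u1 * j2 + j1) mod 4)" .
  have e2: "(\<lambda>t\<in>carrier AutG. AUT_act (Phi u1 j1) (restrict (Ex c2 j2) (carrier AutG) t) \<otimes>\<^bsub>D4\<^esub> restrict (Ex c1 j1) (carrier AutG) t)
     = restrict (Ex ((u1 * c2 + c1) mod 4) ((u1 * j2 + j1) mod 4)) (carrier AutG)"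
    by (rule restrict_ext) (simp add: AUT_act_def mult_pt del: Ex_Phi)
  show ?thesis unfolding E_def Z0_def u1_def[symmetric] u2_def[symmetric]
    using e1 e2 by simp
qed



lemma carrier_ZZ: "carrier ZZ = (\<lambda>(c,jx). E c jx) ` ({0..<4} \<times> {0..<4})"
proof
  show "carrier ZZ \<subseteq> (\<lambda>(c,jx). E c jx) ` ({0..<4} \<times> {0..<4})"
  proof
    fix z assume "z \<in> carrier ZZ"
    then obtain c jx where "c < 4" "jx < 4" "z = E c jx" using ZZ_E by blast
    then show "z \<in> (\<lambda>(c,jx). E c jx) ` ({0..<4} \<times> {0..<4})" by force
  qed
  show "(\<lambda>(c,jx). E c jx) ` ({0..<4} \<times> {0..<4}) \<subseteq> carrier ZZ"
    using E_in by auto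
qed

definition hZ :: "(nat \<times> nat \<Rightarrow> nat \<times> nat) \<times> ((nat \<times> nat \<Rightarrow> nat \<times> nat) \<Rightarrow> nat \<times> nat) \<Rightarrow> int \<times> nat \<times> nat" where
  "hZ z = (int (fst (snd z (Phi 1 1)) div 2), (fst (fst z (0,1)), fst (snd z (Phi 1 1)) mod 2))"

lemma hZ_E: "c < 4 \<Longrightarrow> jx < 4 \<Longrightarrow> hZ (E c jx) = (int (c div 2), (jx, c mod 2))"
  by (simp add: hZ_def E_def)

lemma carrier_C2: "carrier C2 = {0, 1}"
  by (auto simp: C2_def carrier_integer_mod_group)

lemma mult_C2: "x \<otimes>\<^bsub>C2\<^esub> y = (x + y) mod 2"
  by (simp add: C2_def)

lemma one_C2: "\<one>\<^bsub>C2\<^esub> = 0"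
  by (simp add: C2_def)

lemma group_C2: "group C2" by (simp add: C2_def)

lemma h_arith:
  assumes "c1 < 4" "c2 < 4" "j1 < 4" "j2 < 4"
  shows "int (((1+2*(c1 mod 2)) * c2 + c1) mod 4 div 2) = (int (c1 div 2) + int (c2 div 2)) mod 2 \<and>
    ((1+2*(c1 mod 2)) * j2 + j1) mod 4 = (j1 + (if c1 mod 2 = 0 then j2 else 4 - j2)) mod 4 \<and>
    ((1+2*(c1 mod 2)) * c2 + c1) mod 4 mod 2 = (c1 mod 2 + c2 mod 2) mod 2"
proof -
  have A: "\<forall>c1\<in>{0,1,2,3::nat}. \<forall>c2\<in>{0,1,2,3::nat}. int (((1+2*(c1 mod 2)) * c2 + c1) mod 4 div 2) = (int (c1 div 2) + int (c2 div 2)) mod 2 \<and>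
    ((1+2*(c1 mod 2)) * c2 + c1) mod 4 mod 2 = (c1 mod 2 + c2 mod 2) mod 2" by simp
  have B: "((1+2*(c1 mod 2)) * j2 + j1) mod 4 = (j1 + (if c1 mod 2 = 0 then j2 else 4 - j2)) mod 4"
  proof (cases "c1 mod 2 = 0")
    case True then show ?thesis by (simp add: add.commute)
  next
    case False
    then have "c1 mod 2 = 1" by presburger
    have "(3 * j2 + j1) mod 4 = (j1 + (4 - j2)) mod 4"
    proof (cases "j2 = 0")
      case True then show ?thesis by simp
    next
      case False
      then have "3 * j2 + j1 = (j1 + (4 - j2)) + 4 * (j2 - 1)" using assms(4) by simp
      then show ?thesis by (simp only: mod_mult_self2)
    qed
    moreover have u3: "1 + 2 * (c1 mod 2) = (3::nat)" using \<open>c1 mod 2 = 1\<close> by simp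
    moreover have i3: "(if c1 mod 2 = 0 then j2 else 4 - j2) = 4 - j2" using False by simp
    ultimately show ?thesis by (simp only: u3 i3)
  qed
  show ?thesis using A B less4[OF assms(1)] less4[OF assms(2)] by blast
qed

lemma hZ_hom_E:
  assumes c1: "c1 < 4" and j1: "j1 < 4" and c2: "c2 < 4" and j2: "j2 < 4"
  shows "hZ (E c1 j1 \<otimes>\<^bsub>ZZ\<^esub> E c2 j2) = hZ (E c1 j1) \<otimes>\<^bsub>C2 \<times>\<times> D4\<^esub> hZ (E c2 j2)"
proof -
  have "hZ (E c1 j1 \<otimes>\<^bsub>ZZ\<^esub> E c2 j2) = (int (((1+2*(c1 mod 2)) * c2 + c1) mod 4 div 2),
     (((1+2*(c1 mod 2)) * j2 + j1) mod 4, ((1+2*(c1 mod 2)) * c2 + c1) mod 4 mod 2))"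
    unfolding E_mult[OF c1 j1 c2 j2] by (rule hZ_E) simp_all
  also have "\<dots> = ((int (c1 div 2) + int (c2 div 2)) mod 2, ((j1 + (if c1 mod 2 = 0 then j2 else 4 - j2)) mod 4, (c1 mod 2 + c2 mod 2) mod 2))"
    using h_arith[OF c1 c2 j1 j2] by simp
  also have "\<dots> = hZ (E c1 j1) \<otimes>\<^bsub>C2 \<times>\<times> D4\<^esub> hZ (E c2 j2)"
    unfolding hZ_E[OF c1 j1] hZ_E[OF c2 j2] mult_DirProd mult_C2 by simp
  finally show ?thesis .
qed


lemma ZZ_cases:
  assumes "z \<in> carrier ZZ"
  obtains c jx where "c < 4" "jx < 4" "z = E c jx"
  using ZZ_E[OF assms] by blast

lemma hZ_closed: "z \<in> carrier ZZ \<Longrightarrow> hZ z \<in> carrier (C2 \<times>\<times> D4)"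
  by (erule ZZ_cases) (auto simp: hZ_E carrier_C2 dest!: less4)

lemma ZZ_closed: "z \<in> carrier ZZ \<Longrightarrow> w \<in> carrier ZZ \<Longrightarrow> z \<otimes>\<^bsub>ZZ\<^esub> w \<in> carrier ZZ"
  by (erule ZZ_cases, erule ZZ_cases) (simp add: E_mult E_in)

lemma hZ_mult: "z \<in> carrier ZZ \<Longrightarrow> w \<in> carrier ZZ \<Longrightarrow> hZ (z \<otimes>\<^bsub>ZZ\<^esub> w) = hZ z \<otimes>\<^bsub>C2 \<times>\<times> D4\<^esub> hZ w"
  by (erule ZZ_cases, erule ZZ_cases) (simp only: hZ_hom_E)

lemma hZ_hom: "hZ \<in> hom ZZ (C2 \<times>\<times> D4)"
  unfolding hom_def using hZ_closed hZ_mult by auto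

lemma hZ_inj: "inj_on hZ (carrier ZZ)"
proof (rule inj_onI)
  fix z w assume z: "z \<in> carrier ZZ" and w: "w \<in> carrier ZZ" and e: "hZ z = hZ w"
  obtain c j where c: "c < 4" "j < 4" "z = E c j" using z by (rule ZZ_cases)
  obtain c' j' where c': "c' < 4" "j' < 4" "w = E c' j'" using w by (rule ZZ_cases)
  have "c div 2 = c' div 2" "j = j'" "c mod 2 = c' mod 2" using e c c' by (simp_all add: hZ_E)
  then have "c = c'" by (metis div_mult_mod_eq)
  then show "z = w" using c c' \<open>j = j'\<close> by simp
qed

lemma hZ_surj: "hZ ` carrier ZZ = carrier (C2 \<times>\<times> D4)"
proof
  show "hZ ` carrier ZZ \<subseteq> carrier (C2 \<times>\<times> D4)" using hZ_closed by blast
  show "carrier (C2 \<times>\<times> D4) \<subseteq> hZ ` carrier ZZ"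
  proof
    fix y assume y: "y \<in> carrier (C2 \<times>\<times> D4)"
    obtain e k s where ye: "y = (e, (k, s))" by (cases y) auto
    have e: "e = 0 \<or> e = 1" and k: "k < 4" and s: "s < 2" using y ye by (auto simp: carrier_C2)
    have c4: "2 * nat e + s < 4" using e s by auto
    have "hZ (E (2 * nat e + s) k) = y" unfolding hZ_E[OF c4 k] ye using e s by auto
    moreover have "E (2 * nat e + s) k \<in> carrier ZZ" using E_in[OF c4 k] .
    ultimately show "y \<in> hZ ` carrier ZZ" by blast
  qed
qed

lemma hZ_iso: "hZ \<in> iso ZZ (C2 \<times>\<times> D4)"
  unfolding iso_def bij_betw_def using hZ_hom hZ_inj hZ_surj by blast

lemma group_T: "group (C2 \<times>\<times> D4)"
  by (rule DirProd_group[OF group_C2 group_D4])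

lemma one_ZZ: "\<one>\<^bsub>ZZ\<^esub> = E 0 0"
proof -
  have "(\<lambda>t\<in>carrier AutG. (0::nat, 0::nat)) = restrict (Ex 0 0) (carrier AutG)"
    by (rule restrict_ext) (simp add: Ex_def)
  then show ?thesis unfolding Z0_def E_def one_Aut by simp
qed

lemma monoid_ZZ: "monoid ZZ"
proof -
  interpret T: group "C2 \<times>\<times> D4" by (rule group_T)
  have one_in: "\<one>\<^bsub>ZZ\<^esub> \<in> carrier ZZ" unfolding one_ZZ by (rule E_in) simp_all
  have h1: "hZ \<one>\<^bsub>ZZ\<^esub> = \<one>\<^bsub>C2 \<times>\<times> D4\<^esub>" unfolding one_ZZ by (simp add: hZ_E one_C2)
  show ?thesis
  proof (rule monoidI)
    show "\<And>x y. x \<in> carrier ZZ \<Longrightarrow> y \<in> carrier ZZ \<Longrightarrow> x \<otimes>\<^bsub>ZZ\<^esub> y \<in> carrier ZZ" by (rule ZZ_closed)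
    show "\<one>\<^bsub>ZZ\<^esub> \<in> carrier ZZ" by (rule one_in)
    fix x y z assume x: "x \<in> carrier ZZ" and y: "y \<in> carrier ZZ" and z: "z \<in> carrier ZZ"
    have "hZ (x \<otimes>\<^bsub>ZZ\<^esub> y \<otimes>\<^bsub>ZZ\<^esub> z) = hZ (x \<otimes>\<^bsub>ZZ\<^esub> (y \<otimes>\<^bsub>ZZ\<^esub> z))"
      by (simp only: hZ_mult ZZ_closed x y z T.m_assoc[OF hZ_closed[OF x] hZ_closed[OF y] hZ_closed[OF z]])
    then show "x \<otimes>\<^bsub>ZZ\<^esub> y \<otimes>\<^bsub>ZZ\<^esub> z = x \<otimes>\<^bsub>ZZ\<^esub> (y \<otimes>\<^bsub>ZZ\<^esub> z)"
      by (rule inj_onD[OF hZ_inj _ ZZ_closed[OF ZZ_closed[OF x y] z] ZZ_closed[OF x ZZ_closed[OF y z]]])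
  next
    fix x assume x: "x \<in> carrier ZZ"
    have "hZ (\<one>\<^bsub>ZZ\<^esub> \<otimes>\<^bsub>ZZ\<^esub> x) = hZ x" by (simp only: hZ_mult[OF one_in x] h1 T.l_one[OF hZ_closed[OF x]])
    then show "\<one>\<^bsub>ZZ\<^esub> \<otimes>\<^bsub>ZZ\<^esub> x = x" by (rule inj_onD[OF hZ_inj _ ZZ_closed[OF one_in x] x])
    have "hZ (x \<otimes>\<^bsub>ZZ\<^esub> \<one>\<^bsub>ZZ\<^esub>) = hZ x" by (simp only: hZ_mult[OF x one_in] h1 T.r_one[OF hZ_closed[OF x]])
    then show "x \<otimes>\<^bsub>ZZ\<^esub> \<one>\<^bsub>ZZ\<^esub> = x" by (rule inj_onD[OF hZ_inj _ ZZ_closed[OF x one_in] x])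
  qed
qed

lemma ZZ_iso: "ZZ \<cong> C2 \<times>\<times> D4"
  unfolding is_iso_def using hZ_iso by blast

lemma group_ZZ: "group ZZ"
proof (rule monoid.group_l_invI[OF monoid_ZZ])
  interpret T: group "C2 \<times>\<times> D4" by (rule group_T)
  fix x assume x: "x \<in> carrier ZZ"
  have "inv\<^bsub>C2 \<times>\<times> D4\<^esub> (hZ x) \<in> hZ ` carrier ZZ" using hZ_surj T.inv_closed[OF hZ_closed[OF x]] by (simp only:)
  then obtain y where y1: "y \<in> carrier ZZ" and y2: "inv\<^bsub>C2 \<times>\<times> D4\<^esub> (hZ x) = hZ y" by (rule imageE)
  note y = y1 y2[symmetric]
  have one_in: "\<one>\<^bsub>ZZ\<^esub> \<in> carrier ZZ" unfolding one_ZZ by (rule E_in) simp_all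
  have h1: "hZ \<one>\<^bsub>ZZ\<^esub> = \<one>\<^bsub>C2 \<times>\<times> D4\<^esub>" unfolding one_ZZ by (simp add: hZ_E one_C2)
  have "hZ (y \<otimes>\<^bsub>ZZ\<^esub> x) = hZ y \<otimes>\<^bsub>C2 \<times>\<times> D4\<^esub> hZ x" by (rule hZ_mult[OF y(1) x])
  also have "\<dots> = inv\<^bsub>C2 \<times>\<times> D4\<^esub> (hZ x) \<otimes>\<^bsub>C2 \<times>\<times> D4\<^esub> hZ x" by (simp only: y(2))
  also have "\<dots> = \<one>\<^bsub>C2 \<times>\<times> D4\<^esub>" by (rule T.l_inv[OF hZ_closed[OF x]])
  also have "\<dots> = hZ \<one>\<^bsub>ZZ\<^esub>" by (rule h1[symmetric])
  finally have "hZ (y \<otimes>\<^bsub>ZZ\<^esub> x) = hZ \<one>\<^bsub>ZZ\<^esub>" .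
  then have "y \<otimes>\<^bsub>ZZ\<^esub> x = \<one>\<^bsub>ZZ\<^esub>" by (rule inj_onD[OF hZ_inj _ ZZ_closed[OF y(1) x] one_in])
  then show "\<exists>y\<in>carrier ZZ. y \<otimes>\<^bsub>ZZ\<^esub> x = \<one>\<^bsub>ZZ\<^esub>" using y by blast
qed


abbreviation "ZD \<equiv> Zdelta D4 AutG (AUT_d D4) AUT_act"

lemma Zdelta_brute: "\<forall>a\<in>carrier D4. AUT_d D4 a = Phi (1 + 2 * ((if snd a = 0 then 0 else 3) mod 2)) (if fst a mod 2 = 0 then 0 else 2)
   \<and> (\<forall>t\<in>carrier AutG. a \<otimes>\<^bsub>D4\<^esub> inv\<^bsub>D4\<^esub> (t a) = Ex (if snd a = 0 then 0 else 3) (if fst a mod 2 = 0 then 0 else 2) t)"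
  unfolding ball_D4 ball_Aut by (simp add: AUT_d_Phi inv_D4)

lemma Zdelta_E: "a \<in> carrier D4 \<Longrightarrow> ZD a = E (if snd a = 0 then 0 else 3) (if fst a mod 2 = 0 then 0 else 2)"
proof -
  assume a: "a \<in> carrier D4"
  note B = Zdelta_brute[rule_format, OF a]
  have "(\<lambda>t\<in>carrier AutG. a \<otimes>\<^bsub>D4\<^esub> inv\<^bsub>D4\<^esub> (AUT_act t a)) = restrict (Ex (if snd a = 0 then 0 else 3) (if fst a mod 2 = 0 then 0 else 2)) (carrier AutG)"
    by (rule restrict_ext) (simp only: AUT_act_def B)
  then show ?thesis unfolding Zdelta_def E_def using B by simp
qed

definition gZ :: "(nat \<times> nat \<Rightarrow> nat \<times> nat) \<times> ((nat \<times> nat \<Rightarrow> nat \<times> nat) \<Rightarrow> nat \<times> nat) \<Rightarrow> int \<times> int" where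
  "gZ z = (int (fst (fst z (0,1)) mod 2), (int (fst (snd z (Phi 1 1)) div 2) + int (fst (snd z (Phi 1 1)) mod 2)) mod 2)"

lemma gZ_E: "c < 4 \<Longrightarrow> jx < 4 \<Longrightarrow> gZ (E c jx) = (int (jx mod 2), (int (c div 2) + int (c mod 2)) mod 2)"
  by (simp add: gZ_def E_def)

lemma g_arith: "\<forall>c1\<in>{0,1,2,3::nat}. \<forall>j1\<in>{0,1,2,3::nat}. \<forall>c2\<in>{0,1,2,3::nat}. \<forall>j2\<in>{0,1,2,3::nat}.
   int (((1 + 2 * (c1 mod 2)) * j2 + j1) mod 4 mod 2) = (int (j1 mod 2) + int (j2 mod 2)) mod 2 \<and>
   (int (((1 + 2 * (c1 mod 2)) * c2 + c1) mod 4 div 2) + int (((1 + 2 * (c1 mod 2)) * c2 + c1) mod 4 mod 2)) mod 2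
   = ((int (c1 div 2) + int (c1 mod 2)) mod 2 + (int (c2 div 2) + int (c2 mod 2)) mod 2) mod 2"
  by simp

lemma carrier_C2C2: "carrier (C2 \<times>\<times> C2) = {0,1} \<times> {0,1}"
  by (simp add: carrier_C2)

lemma gZ_closed: "z \<in> carrier ZZ \<Longrightarrow> gZ z \<in> carrier (C2 \<times>\<times> C2)"
  by (erule ZZ_cases) (simp add: gZ_E carrier_C2; presburger)

lemma gZ_mult: "z \<in> carrier ZZ \<Longrightarrow> w \<in> carrier ZZ \<Longrightarrow> gZ (z \<otimes>\<^bsub>ZZ\<^esub> w) = gZ z \<otimes>\<^bsub>C2 \<times>\<times> C2\<^esub> gZ w"
proof (erule ZZ_cases, erule ZZ_cases)
  fix c1 j1 c2 j2 assume c1: "c1 < 4" and j1: "j1 < 4" and c2: "c2 < 4" and j2: "j2 < 4"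
    and z: "z = E c1 j1" and w: "w = E c2 j2"
  have "gZ (z \<otimes>\<^bsub>ZZ\<^esub> w) = (int (((1 + 2 * (c1 mod 2)) * j2 + j1) mod 4 mod 2),
     (int (((1 + 2 * (c1 mod 2)) * c2 + c1) mod 4 div 2) + int (((1 + 2 * (c1 mod 2)) * c2 + c1) mod 4 mod 2)) mod 2)"
    unfolding z w E_mult[OF c1 j1 c2 j2] by (rule gZ_E) simp_all
  also have "\<dots> = ((int (j1 mod 2) + int (j2 mod 2)) mod 2, ((int (c1 div 2) + int (c1 mod 2)) mod 2 + (int (c2 div 2) + int (c2 mod 2)) mod 2) mod 2)"
    using g_arith less4[OF c1] less4[OF j1] less4[OF c2] less4[OF j2] by blast
  also have "\<dots> = gZ z \<otimes>\<^bsub>C2 \<times>\<times> C2\<^esub> gZ w"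
    unfolding z w gZ_E[OF c1 j1] gZ_E[OF c2 j2] mult_DirProd mult_C2 by simp
  finally show ?thesis .
qed

lemma group_C2C2: "group (C2 \<times>\<times> C2)" by (rule DirProd_group[OF group_C2 group_C2])

lemma gZ_group_hom: "group_hom ZZ (C2 \<times>\<times> C2) gZ"
  unfolding group_hom_def group_hom_axioms_def hom_def
  using group_ZZ group_C2C2 gZ_closed gZ_mult by auto

lemma gZ_surj: "gZ ` carrier ZZ = carrier (C2 \<times>\<times> C2)"
proof
  show "gZ ` carrier ZZ \<subseteq> carrier (C2 \<times>\<times> C2)" using gZ_closed by blast
  show "carrier (C2 \<times>\<times> C2) \<subseteq> gZ ` carrier ZZ"
  proof
    fix y assume "y \<in> carrier (C2 \<times>\<times> C2)"
    then have "y \<in> {(0,0),(0,1),(1,0),(1,1)}" unfolding carrier_C2C2 by auto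
    moreover have "gZ (E 0 0) = (0,0)" "gZ (E 1 0) = (0,1)" "gZ (E 0 1) = (1,0)" "gZ (E 1 1) = (1,1)"
      by (simp_all add: gZ_E)
    moreover have "E 0 0 \<in> carrier ZZ" "E 1 0 \<in> carrier ZZ" "E 0 1 \<in> carrier ZZ" "E 1 1 \<in> carrier ZZ"
      by (simp_all add: E_in)
    ultimately show "y \<in> gZ ` carrier ZZ" by (elim insertE emptyE; metis image_eqI)
  qed
qed

lemma kernel_gZ: "kernel ZZ (C2 \<times>\<times> C2) gZ = {E 0 0, E 0 2, E 3 0, E 3 2}"
proof
  show "kernel ZZ (C2 \<times>\<times> C2) gZ \<subseteq> {E 0 0, E 0 2, E 3 0, E 3 2}"
  proof
    fix z assume "z \<in> kernel ZZ (C2 \<times>\<times> C2) gZ"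
    then have z: "z \<in> carrier ZZ" and g: "gZ z = (0,0)" by (auto simp: kernel_def one_C2)
    obtain c j where c: "c < 4" "j < 4" "z = E c j" using z by (rule ZZ_cases)
    have "\<forall>c\<in>{0,1,2,3::nat}. \<forall>j\<in>{0,1,2,3::nat}. (int (j mod 2), (int (c div 2) + int (c mod 2)) mod 2) = (0,0) \<longrightarrow>
       (c,j) \<in> {(0,0),(0,2),(3,0),(3,2)}" by simp
    then have "(c,j) \<in> {(0,0),(0,2),(3,0),(3,2)}" using g c less4[of c] less4[of j] by (simp only: gZ_E)
    then show "z \<in> {E 0 0, E 0 2, E 3 0, E 3 2}" using c by auto
  qed
  show "{E 0 0, E 0 2, E 3 0, E 3 2} \<subseteq> kernel ZZ (C2 \<times>\<times> C2) gZ"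
    by (auto simp: kernel_def gZ_E E_in one_C2)
qed

lemma image_ZD: "ZD ` carrier D4 = {E 0 0, E 0 2, E 3 0, E 3 2}"
proof -
  have "ZD ` carrier D4 = ZD ` {(0,0),(0,1),(1,0),(1,1),(2,0),(2,1),(3,0),(3,1)}" by (simp only: carrier_D4)
  also have "\<dots> = {E 0 0, E 0 2, E 3 0, E 3 2}"
    by (simp add: Zdelta_E insert_commute)
  finally show ?thesis .
qed

lemma pi0_iso: "pi0 D4 ZZ ZD \<cong> C2 \<times>\<times> C2"
  unfolding pi0_def image_ZD kernel_gZ[symmetric]
  by (rule group_hom.FactGroup_iso[OF gZ_group_hom gZ_surj])


lemma E_inj: "c < 4 \<Longrightarrow> j < 4 \<Longrightarrow> c' < 4 \<Longrightarrow> j' < 4 \<Longrightarrow> (E c j = E c' j') = (c = c' \<and> j = j')"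
proof
  assume a: "c < 4" "j < 4" "c' < 4" "j' < 4" and e: "E c j = E c' j'"
  have "hZ (E c j) = hZ (E c' j')" using e by simp
  then have "c div 2 = c' div 2" "j = j'" "c mod 2 = c' mod 2" using a by (simp_all add: hZ_E)
  then show "c = c' \<and> j = j'" by (metis div_mult_mod_eq)
qed simp

lemma kernel_ZD: "kernel D4 ZZ ZD = {(0,0),(2,0)}"
proof -
  have "\<forall>a\<in>carrier D4. (ZD a = \<one>\<^bsub>ZZ\<^esub>) = (a = (0,0) \<or> a = (2,0))"
    unfolding ball_D4 one_ZZ by (simp add: Zdelta_E E_inj)
  then have "kernel D4 ZZ ZD = {a \<in> carrier D4. a = (0,0) \<or> a = (2,0)}" unfolding kernel_def by blast
  also have "\<dots> = {(0,0),(2,0)}" by auto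
  finally show ?thesis .
qed

lemma pi1_iso: "pi1 D4 ZZ ZD \<cong> C2"
proof -
  define p where "p = (\<lambda>a::nat \<times> nat. int (fst a div 2))"
  have c: "carrier (pi1 D4 ZZ ZD) = {(0,0),(2,0)}" unfolding pi1_def kernel_ZD by simp
  have m: "\<And>x y. x \<otimes>\<^bsub>pi1 D4 ZZ ZD\<^esub> y = x \<otimes>\<^bsub>D4\<^esub> y" unfolding pi1_def by simp
  have "p \<in> iso (pi1 D4 ZZ ZD) C2"
    unfolding iso_def hom_def bij_betw_def c m
    by (auto simp: p_def carrier_C2 mult_C2 inj_on_def)
  then show ?thesis unfolding is_iso_def by blast
qed

lemma card_pi0Z: "card (carrier (pi0 D4 ZZ ZD)) = 4"
  using iso_same_card[OF pi0_iso] by (simp add: carrier_C2)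

lemma pi0N_carrier: "\<exists>S. carrier (pi0 (norrie_G1 D4 AutG AUT_act) (norrie_G0 D4 AutG AUT_act) (AUT_d D4)) = {S}"
  unfolding pi0_def FactGroup_def RCOSETS_def norrie0 by auto

lemma noniso: "f \<notin> iso (pi0 (norrie_G1 D4 AutG AUT_act) (norrie_G0 D4 AutG AUT_act) (AUT_d D4)) (pi0 D4 ZZ ZD)"
proof
  assume "f \<in> iso (pi0 (norrie_G1 D4 AutG AUT_act) (norrie_G0 D4 AutG AUT_act) (AUT_d D4)) (pi0 D4 ZZ ZD)"
  then have "bij_betw f (carrier (pi0 (norrie_G1 D4 AutG AUT_act) (norrie_G0 D4 AutG AUT_act) (AUT_d D4))) (carrier (pi0 D4 ZZ ZD))"
    by (simp add: iso_def)
  then have "card (carrier (pi0 (norrie_G1 D4 AutG AUT_act) (norrie_G0 D4 AutG AUT_act) (AUT_d D4))) = 4"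
    using bij_betw_same_card card_pi0Z by metis
  then show False using pi0N_carrier by auto
qed

theorem mainTheorem12:
  defines "Aut \<equiv> AutoGroup D4"
      and "d \<equiv> AUT_d D4"
      and "act \<equiv> AUT_act"
  shows "crossed_module D4 Aut d act
    \<and> D4_a [^]\<^bsub>D4\<^esub> (4::nat) = \<one>\<^bsub>D4\<^esub> \<and> D4_b [^]\<^bsub>D4\<^esub> (2::nat) = \<one>\<^bsub>D4\<^esub>
    \<and> D4_b \<otimes>\<^bsub>D4\<^esub> D4_a \<otimes>\<^bsub>D4\<^esub> D4_b = D4_a [^]\<^bsub>D4\<^esub> (3::nat)
    \<and> Z0 D4 Aut d act \<cong> C2 \<times>\<times> D4
    \<and> pi0 D4 (Z0 D4 Aut d act) (Zdelta D4 Aut d act) \<cong> C2 \<times>\<times> C2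
    \<and> pi1 D4 (Z0 D4 Aut d act) (Zdelta D4 Aut d act) \<cong> C2
    \<and> carrier (norrie_G1 D4 Aut act) = {\<one>\<^bsub>D4\<^esub>, D4_a [^]\<^bsub>D4\<^esub> (2::nat)}
    \<and> carrier (norrie_G0 D4 Aut act) = {\<one>\<^bsub>Aut\<^esub>}
    \<and> pi0_map D4 (Z0 D4 Aut d act) (Zdelta D4 Aut d act) (j0 D4 Aut)
        \<notin> iso (pi0 (norrie_G1 D4 Aut act) (norrie_G0 D4 Aut act) d)
              (pi0 D4 (Z0 D4 Aut d act) (Zdelta D4 Aut d act))
    \<and> \<not> weak_equivalence (norrie_G1 D4 Aut act) (norrie_G0 D4 Aut act) d
          D4 (Z0 D4 Aut d act) (Zdelta D4 Aut d act) (\<lambda>a. a) (j0 D4 Aut)"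
  unfolding Aut_def d_def act_def weak_equivalence_def
  using cm pows ZZ_iso pi0_iso pi1_iso norrie1 norrie0 noniso by blast


end
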